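(* Let $\hat n_1,\hat n_2,\hat n_3\in\mathbb{R}^3$ be unit vectors, $\eta\in[0,1]$, and $\mathcal{M}_k$ the qubit POVM $\{\tfrac12\mathbf{1}+\tfrac\eta2X_k\vec\sigma\cdot\hat n_k\}_{X_k\in\{+1,-1\}}$, and suppose each pair $\mathcal{M}_i,\mathcal{M}_j$ ($i\neq j$) admits a joint measurement $\mathcal{M}_{ij}$. Then in any generalized-noncontextual ontological model of quantum theory, for every ontic state $\lambda$ (and hence for every preparation), $$R_3=\frac13\sum_{i<j}p(X_i\neq X_j|\mathcal{M}_{ij};\lambda)\leq1-\frac\eta3.$$
   Context: An ontological model of quantum theory specifies ontic states $\lambda$, distributions $p(\lambda|P)$ for preparations and response functions $p(X|M;\lambda)$ for measurement procedures reproducing quantum statistics. It is measurement-noncontextual if procedures realizing the same POVM have identical response functions, preparation-noncontextual if procedures realizing the same density operator have identical distributions, and generalized-noncontextual if both hold. A joint measurement of POVMs $\{E^i_{X_i}\},\{E^j_{X_j}\}$ is a POVM $\{F_{X_iX_j}\}$ with $\sum_{X_j}F_{X_iX_j}=E^i_{X_i}$ and $\sum_{X_i}F_{X_iX_j}=E^j_{X_j}$. *)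

theory Defs
  imports "HOL-Probability.Probability"
begin

type_synonym cmat = "complex^2^2"

text \<open>Measurement outcomes are labelled by lists of integers: a single
  two-outcome measurement has outcomes [1], [-1]; a joint measurement has
  outcomes [x_i, x_j].\<close>
type_synonym outcome = "int list"

definition pauli :: "3 \<Rightarrow> cmat" where
  "pauli k =
     (if k = 0 then (\<chi> i j. if i = j then 0 else 1)
      else if k = 1 then (\<chi> i j. if i = j then 0 else if i = 0 then - \<i> else \<i>)
      else (\<chi> i j. if i \<noteq> j then 0 else if i = 0 then 1 else -1))"

definition sigma_dot :: "real^3 \<Rightarrow> cmat" where
  "sigma_dot n = (\<Sum>k\<in>UNIV. n$k *\<^sub>R pauli k)"

definition adj :: "cmat \<Rightarrow> cmat" where
  "adj A = (\<chi> i j. cnj (A$j$i))"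

definition psd :: "cmat \<Rightarrow> bool" where
  "psd A \<longleftrightarrow> A = adj A \<and>
     (\<forall>v::complex^2. 0 \<le> Re (\<Sum>i\<in>UNIV. cnj (v$i) * (A *v v)$i))"

definition is_effect :: "cmat \<Rightarrow> bool" where
  "is_effect E \<longleftrightarrow> psd E \<and> psd (mat 1 - E)"

definition is_density :: "cmat \<Rightarrow> bool" where
  "is_density \<rho> \<longleftrightarrow> psd \<rho> \<and> trace \<rho> = 1"

definition noisy_effect :: "real \<Rightarrow> real^3 \<Rightarrow> int \<Rightarrow> cmat" where
  "noisy_effect \<eta> n x = (1/2) *\<^sub>R mat 1 + (\<eta> / 2 * of_int x) *\<^sub>R sigma_dot n"

definition is_joint_measurement ::
  "(outcome \<Rightarrow> cmat) \<Rightarrow> (int \<Rightarrow> cmat) \<Rightarrow> (int \<Rightarrow> cmat) \<Rightarrow> bool" where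
  "is_joint_measurement F Ei Ej \<longleftrightarrow>
     (\<forall>a\<in>{1,-1}. \<forall>b\<in>{1,-1}. is_effect (F [a,b])) \<and>
     (\<Sum>a\<in>{1,-1}. \<Sum>b\<in>{1,-1}. F [a,b]) = mat 1 \<and>
     (\<forall>a\<in>{1,-1}. (\<Sum>b\<in>{1,-1}. F [a,b]) = Ei a) \<and>
     (\<forall>b\<in>{1,-1}. (\<Sum>a\<in>{1,-1}. F [a,b]) = Ej b)"

definition qubit_operational_theory ::
  "('p \<Rightarrow> cmat) \<Rightarrow> ('m \<Rightarrow> outcome set) \<Rightarrow> ('m \<Rightarrow> outcome \<Rightarrow> cmat) \<Rightarrow> bool" where
  "qubit_operational_theory dens outs povm \<longleftrightarrow>
     (\<forall>P. is_density (dens P)) \<and>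
     (\<forall>\<rho>. is_density \<rho> \<longrightarrow> (\<exists>P. dens P = \<rho>)) \<and>
     (\<forall>M. finite (outs M) \<and> outs M \<noteq> {} \<and> (\<forall>x\<in>outs M. is_effect (povm M x)) \<and>
          (\<forall>x. x \<notin> outs M \<longrightarrow> povm M x = 0) \<and> sum (povm M) (outs M) = mat 1) \<and>
     (\<forall>Os E. finite Os \<and> Os \<noteq> {} \<and> (\<forall>x\<in>Os. is_effect (E x)) \<and> sum E Os = mat 1 \<longrightarrow>
          (\<exists>M. outs M = Os \<and> (\<forall>x\<in>Os. povm M x = E x)))"

text \<open>Ontic space: measurable space L; mu P is the distribution over ontic
  states for preparation P; xi M x l is the response function p(x|M;l).\<close>
definition ontological_model ::
  "'l measure \<Rightarrow> ('p \<Rightarrow> cmat) \<Rightarrow> ('m \<Rightarrow> outcome set) \<Rightarrow> ('m \<Rightarrow> outcome \<Rightarrow> cmat) \<Rightarrow>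
   ('p \<Rightarrow> 'l measure) \<Rightarrow> ('m \<Rightarrow> outcome \<Rightarrow> 'l \<Rightarrow> real) \<Rightarrow> bool" where
  "ontological_model L dens outs povm \<mu> \<xi> \<longleftrightarrow>
     (\<forall>P. prob_space (\<mu> P) \<and> sets (\<mu> P) = sets L) \<and>
     (\<forall>M x. \<xi> M x \<in> borel_measurable L) \<and>
     (\<forall>M x l. 0 \<le> \<xi> M x l) \<and>
     (\<forall>M x l. x \<notin> outs M \<longrightarrow> \<xi> M x l = 0) \<and>
     (\<forall>M l. l \<in> space L \<longrightarrow> (\<Sum>x\<in>outs M. \<xi> M x l) = 1) \<and>
     (\<forall>P M x. x \<in> outs M \<longrightarrow>
        (\<integral>l. \<xi> M x l \<partial>\<mu> P) = Re (trace (dens P ** povm M x))) \<and>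
     (\<forall>P1 P2 t. 0 \<le> t \<and> t \<le> 1 \<longrightarrow>
        (\<exists>P. dens P = t *\<^sub>R dens P1 + (1 - t) *\<^sub>R dens P2 \<and>
             (\<forall>A\<in>sets L. measure (\<mu> P) A =
                 t * measure (\<mu> P1) A + (1 - t) * measure (\<mu> P2) A))) \<and>
     (\<forall>M1 M2 t. 0 \<le> t \<and> t \<le> 1 \<longrightarrow>
        (\<exists>M. outs M = outs M1 \<union> outs M2 \<and>
             povm M = (\<lambda>x. t *\<^sub>R povm M1 x + (1 - t) *\<^sub>R povm M2 x) \<and>
             \<xi> M = (\<lambda>x l. t * \<xi> M1 x l + (1 - t) * \<xi> M2 x l))) \<and>
     (\<forall>M (f :: outcome \<Rightarrow> outcome).
        (\<exists>M'. outs M' = f ` outs M \<and>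
              povm M' = (\<lambda>y. \<Sum>x\<in>{x\<in>outs M. f x = y}. povm M x) \<and>
              \<xi> M' = (\<lambda>y l. \<Sum>x\<in>{x\<in>outs M. f x = y}. \<xi> M x l)))"

definition preparation_noncontextual ::
  "('p \<Rightarrow> cmat) \<Rightarrow> ('p \<Rightarrow> 'l measure) \<Rightarrow> bool" where
  "preparation_noncontextual dens \<mu> \<longleftrightarrow>
     (\<forall>P1 P2. dens P1 = dens P2 \<longrightarrow> \<mu> P1 = \<mu> P2)"

definition measurement_noncontextual ::
  "('m \<Rightarrow> outcome set) \<Rightarrow> ('m \<Rightarrow> outcome \<Rightarrow> cmat) \<Rightarrow> ('m \<Rightarrow> outcome \<Rightarrow> 'l \<Rightarrow> real) \<Rightarrow> bool" where
  "measurement_noncontextual outs povm \<xi> \<longleftrightarrow>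
     (\<forall>M1 M2. outs M1 = outs M2 \<and> povm M1 = povm M2 \<longrightarrow> \<xi> M1 = \<xi> M2)"

definition generalized_noncontextual ::
  "('p \<Rightarrow> cmat) \<Rightarrow> ('m \<Rightarrow> outcome set) \<Rightarrow> ('m \<Rightarrow> outcome \<Rightarrow> cmat) \<Rightarrow>
   ('p \<Rightarrow> 'l measure) \<Rightarrow> ('m \<Rightarrow> outcome \<Rightarrow> 'l \<Rightarrow> real) \<Rightarrow> bool" where
  "generalized_noncontextual dens outs povm \<mu> \<xi> \<longleftrightarrow>
     preparation_noncontextual dens \<mu> \<and> measurement_noncontextual outs povm \<xi>"

definition prob_neq :: "('m \<Rightarrow> outcome \<Rightarrow> 'l \<Rightarrow> real) \<Rightarrow> 'm \<Rightarrow> 'l \<Rightarrow> real" where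
  "prob_neq \<xi> M l = \<xi> M [1, -1] l + \<xi> M [-1, 1] l"

end

theory Submission
  imports Defs
begin
lemma UNIV2': "(UNIV::2 set) = {0,1}"
proof -
  have "(2::2) = 0" by simp
  have "x \<in> {0,1}" for x :: 2
    using exhaust_2[of x] \<open>(2::2) = 0\<close> by auto
  then show ?thesis by blast
qed
lemma sum2': "sum f (UNIV::2 set) = f 0 + f 1"
  unfolding UNIV2' by simp
lemma all2': "(\<forall>i::2. P i) \<longleftrightarrow> P 0 \<and> P 1"
  using UNIV2' by (metis UNIV_I insertE singletonD)

lemma cmat_eq_iff: "(A::cmat) = B \<longleftrightarrow> (A$0$0 = B$0$0 \<and> A$0$1 = B$0$1 \<and> A$1$0 = B$1$0 \<and> A$1$1 = B$1$1)"
  by (auto simp: vec_eq_iff all2')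

definition qf :: "cmat \<Rightarrow> complex \<Rightarrow> complex \<Rightarrow> real" where
  "qf A v0 v1 = Re (cnj v0 * A$0$0 * v0 + cnj v0 * A$0$1 * v1 + cnj v1 * A$1$0 * v0 + cnj v1 * A$1$1 * v1)"

lemma qf_vec: "Re (\<Sum>i\<in>UNIV. cnj (v$i) * (A *v v)$i) = qf A (v$0) (v$1)"
  by (simp add: qf_def matrix_vector_mult_def sum2' algebra_simps)

lemma psd_iff: "psd A \<longleftrightarrow> A = adj A \<and> (\<forall>v0 v1. 0 \<le> qf A v0 v1)"
proof
  assume "psd A"
  then have h: "A = adj A" "\<forall>v::complex^2. 0 \<le> qf A (v$0) (v$1)" unfolding psd_def qf_vec by auto
  have "0 \<le> qf A v0 v1" for v0 v1
    using h(2)[rule_format, of "\<chi> i. if i = 0 then v0 else v1"] by simp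
  with h show "A = adj A \<and> (\<forall>v0 v1. 0 \<le> qf A v0 v1)" by blast
next
  assume "A = adj A \<and> (\<forall>v0 v1. 0 \<le> qf A v0 v1)"
  then show "psd A" unfolding psd_def qf_vec by blast
qed

lemma adj_entries: "adj A $ i $ j = cnj (A $ j $ i)"
  by (simp add: adj_def)

lemma trace2: "trace (A::cmat) = A$0$0 + A$1$1"
  by (simp add: trace_def sum2')

lemma density_compl:
  assumes "is_density \<rho>" shows "is_density (mat 1 - \<rho>)"
proof -
  have ps: "psd \<rho>" and tr: "\<rho>$0$0 + \<rho>$1$1 = 1" using assms by (auto simp: is_density_def trace2)
  then have herm: "\<rho> = adj \<rho>" and q: "\<forall>v0 v1. 0 \<le> qf \<rho> v0 v1" by (auto simp: psd_iff)
  have hh: "\<rho>$i$j = cnj (\<rho>$j$i)" for i j using herm by (metis adj_entries)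
  have "mat 1 - \<rho> = adj (mat 1 - \<rho>)"
    unfolding vec_eq_iff by (auto simp: adj_def mat_def hh[symmetric]) 
  moreover have "qf (mat 1 - \<rho>) v0 v1 = qf \<rho> (cnj v1) (- cnj v0)" for v0 v1
  proof -
    have e: "1 - \<rho>$0$0 = \<rho>$1$1" "1 - \<rho>$1$1 = \<rho>$0$0" using tr by (simp_all add: algebra_simps)
    have m: "(mat 1 - \<rho>)$0$0 = \<rho>$1$1" "(mat 1 - \<rho>)$1$1 = \<rho>$0$0"
       "(mat 1 - \<rho>)$0$1 = - \<rho>$0$1" "(mat 1 - \<rho>)$1$0 = - \<rho>$1$0"
      using e by (simp_all add: mat_def)
    have "cnj v0 * \<rho>$1$1 * v0 + cnj v0 * (- \<rho>$0$1) * v1 + cnj v1 * (- \<rho>$1$0) * v0 + cnj v1 * \<rho>$0$0 * v1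
      = cnj (cnj v1) * \<rho>$0$0 * cnj v1 + cnj (cnj v1) * \<rho>$0$1 * (- cnj v0) + cnj (- cnj v0) * \<rho>$1$0 * cnj v1 + cnj (- cnj v0) * \<rho>$1$1 * (- cnj v0)"
      by (simp only: complex_cnj_cnj complex_cnj_minus) (simp add: algebra_simps)
    then show ?thesis by (simp only: qf_def m)
  qed
  ultimately have "psd (mat 1 - \<rho>)" using q by (simp add: psd_iff)
  moreover have "trace (mat 1 - \<rho>) = 2 - (\<rho>$0$0 + \<rho>$1$1)" by (simp add: trace2 mat_def)
  then have "trace (mat 1 - \<rho>) = 1" using tr by simp
  ultimately show ?thesis by (simp add: is_density_def)
qed
lemma UNIV3': "(UNIV::3 set) = {0,1,2}"
proof -
  have "(3::3) = 0" by simp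
  have "x \<in> {0,1,2}" for x :: 3
    using exhaust_3[of x] \<open>(3::3) = 0\<close> by auto
  then show ?thesis by blast
qed
lemma sum3': "sum f (UNIV::3 set) = f 0 + f 1 + f 2"
  unfolding UNIV3' by (simp add: add.assoc)
lemma sig00: "sigma_dot n $ 0 $ 0 = complex_of_real (n$2)"
  by (simp add: sigma_dot_def sum3' pauli_def, simp add: scaleR_conv_of_real)
lemma sig01: "sigma_dot n $ 0 $ 1 = complex_of_real (n$0) - \<i> * complex_of_real (n$1)"
  by (simp add: sigma_dot_def sum3' pauli_def, simp add: scaleR_conv_of_real)
lemma sig10: "sigma_dot n $ 1 $ 0 = complex_of_real (n$0) + \<i> * complex_of_real (n$1)"
  by (simp add: sigma_dot_def sum3' pauli_def, simp add: scaleR_conv_of_real)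
lemma sig11: "sigma_dot n $ 1 $ 1 = - complex_of_real (n$2)"
  by (simp add: sigma_dot_def sum3' pauli_def, simp add: scaleR_conv_of_real)
lemma norm3: "norm (n::real^3) = 1 \<Longrightarrow> (n$0)^2 + (n$1)^2 + (n$2)^2 = 1"
  by (simp add: norm_vec_def L2_set_def sum3')

lemma ne_entries:
  "noisy_effect e n x $ 0 $ 0 = complex_of_real (1/2 + e/2 * of_int x * n$2)"
  "noisy_effect e n x $ 0 $ 1 = complex_of_real (e/2 * of_int x) * (complex_of_real (n$0) - \<i> * complex_of_real (n$1))"
  "noisy_effect e n x $ 1 $ 0 = complex_of_real (e/2 * of_int x) * (complex_of_real (n$0) + \<i> * complex_of_real (n$1))"
  "noisy_effect e n x $ 1 $ 1 = complex_of_real (1/2 - e/2 * of_int x * n$2)"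
  by (simp_all add: noisy_effect_def mat_def sig00 sig01 sig10 sig11, (simp add: scaleR_conv_of_real algebra_simps)+)

lemma cs3: "(x0*y0 + x1*y1 + x2*y2)^2 \<le> (x0^2+x1^2+x2^2) * (y0^2+y1^2+y2^2::real)"
proof -
  have "(x0^2+x1^2+x2^2) * (y0^2+y1^2+y2^2) - (x0*y0 + x1*y1 + x2*y2)^2
     = (x0*y1-x1*y0)^2 + (x0*y2-x2*y0)^2 + (x1*y2-x2*y1)^2"
    by (simp add: power2_eq_square algebra_simps)
  moreover have "0 \<le> (x0*y1-x1*y0)^2 + (x0*y2-x2*y0)^2 + (x1*y2-x2*y1)^2" by simp
  ultimately show ?thesis by linarith
qed

lemma qf_ne: "qf (noisy_effect e n x) v0 v1 =
   ((Re v0)^2 + (Im v0)^2 + (Re v1)^2 + (Im v1)^2)/2 + (e/2 * of_int x) *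
   (n$2 * ((Re v0)^2 + (Im v0)^2 - (Re v1)^2 - (Im v1)^2) + n$0 * (2*(Re v0 * Re v1 + Im v0 * Im v1))
    + n$1 * (2*(Re v0 * Im v1 - Im v0 * Re v1)))"
  unfolding qf_def ne_entries by (simp add: power2_eq_square field_simps)

lemma herm_ne: "noisy_effect e n x = adj (noisy_effect e n x)"
  by (simp add: cmat_eq_iff adj_entries ne_entries)

lemma psd_ne:
  assumes "norm n = 1" "\<bar>e * of_int x\<bar> \<le> 1"
  shows "psd (noisy_effect e n x)"
proof -
  have "0 \<le> qf (noisy_effect e n x) v0 v1" for v0 v1
  proof -
    define a where "a = Re v0"
    define b where "b = Im v0"
    define p where "p = Re v1"
    define q where "q = Im v1"
    define N where "N = a^2+b^2+p^2+q^2"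
    define X where "X = n$2 * (a^2+b^2-p^2-q^2) + n$0 * (2*(a*p+b*q)) + n$1 * (2*(a*q-b*p))"
    have N0: "0 \<le> N" unfolding N_def by simp
    have "X^2 \<le> ((n$2)^2+(n$0)^2+(n$1)^2) * ((a^2+b^2-p^2-q^2)^2 + (2*(a*p+b*q))^2 + (2*(a*q-b*p))^2)"
      unfolding X_def by (rule cs3)
    also have "\<dots> = N^2" using norm3[OF assms(1)] unfolding N_def
      by (simp add: power2_eq_square algebra_simps)
    finally have "\<bar>X\<bar> \<le> N" using N0 by (metis abs_le_square_iff abs_of_nonneg)
    have "\<bar>(e/2 * of_int x) * X\<bar> = \<bar>e * of_int x\<bar> * \<bar>X\<bar> / 2" by (simp add: abs_mult)
    also have "\<dots> \<le> 1 * N / 2" using mult_mono[OF assms(2) \<open>\<bar>X\<bar> \<le> N\<close>] by simp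
    finally have "- (N/2) \<le> (e/2 * of_int x) * X" by linarith
    moreover have "qf (noisy_effect e n x) v0 v1 = N/2 + (e/2 * of_int x) * X"
      unfolding qf_ne N_def X_def a_def b_def p_def q_def by simp
    ultimately show ?thesis by linarith
  qed
  then show ?thesis using herm_ne by (simp add: psd_iff)
qed

lemma ne_compl: "mat 1 - noisy_effect e n x = noisy_effect e n (-x)"
  by (simp add: cmat_eq_iff ne_entries mat_def)

lemma ne_sum: "noisy_effect e n x + noisy_effect e n (-x) = mat 1"
  by (metis ne_compl diff_add_cancel add.commute)

lemma trace_ne: "trace (noisy_effect e n x) = 1"
  by (simp add: trace2 ne_entries)

lemma ne_decomp: "noisy_effect e n x = ((1+e)/2) *\<^sub>R noisy_effect 1 n x + ((1-e)/2) *\<^sub>R noisy_effect 1 n (-x)"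
  apply (simp add: cmat_eq_iff ne_entries)
  apply (simp add: scaleR_conv_of_real complex_eq_iff field_simps)
  done

lemma half_mix: "(1/2) *\<^sub>R noisy_effect 1 n x + (1/2) *\<^sub>R noisy_effect 1 n (-x) = (1/2) *\<^sub>R mat 1"
  by (metis ne_sum scaleR_add_right)

lemma trace_orth:
  assumes "norm n = 1" "x \<in> {1,-1}"
  shows "Re (trace (noisy_effect 1 n x ** noisy_effect 1 n (-x))) = 0"
proof -
  have x2: "(real_of_int x)^2 = 1" using assms(2) by auto
  have nn: "(n$0)^2 + (n$1)^2 + (n$2)^2 = 1" using norm3[OF assms(1)] .
  have "Re (trace (noisy_effect 1 n x ** noisy_effect 1 n (-x))) =
     2 * (1/4 - (real_of_int x)^2/4 * ((n$0)^2 + (n$1)^2 + (n$2)^2))"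
    apply (simp add: trace2 matrix_matrix_mult_def sum2' ne_entries)
    apply (simp add: power2_eq_square field_simps)
    done
  then show ?thesis using x2 nn by simp
qed

lemma effect_ne1:
  assumes "norm n = 1" "x \<in> {1,-1}"
  shows "is_effect (noisy_effect 1 n x)"
proof -
  have "psd (noisy_effect 1 n x)" using assms by (intro psd_ne) auto
  moreover have "psd (noisy_effect 1 n (-x))" using assms by (intro psd_ne) auto
  ultimately show ?thesis by (simp add: is_effect_def ne_compl)
qed

lemma density_ne1:
  assumes "norm n = 1" "x \<in> {1,-1}"
  shows "is_density (noisy_effect 1 n x)"
  using assms effect_ne1 trace_ne by (simp add: is_density_def is_effect_def)

definition O1 :: "outcome set" where "O1 = {[1],[-1]}"

definition JO :: "outcome set" where "JO = {[a, b] | a b. a \<in> {1, -1} \<and> b \<in> {1, -1}}"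

lemma JO_eq: "JO = {[1,1],[1,-1],[-1,1],[-1,-1]}"
  unfolding JO_def by auto

lemma sum_O1: "sum f O1 = f [1] + f [-1]"
  by (simp add: O1_def)

lemma sum_JO: "sum f JO = f [1,1] + f [1,-1] + f [-1,1] + f [-1,-1]"
  by (simp add: JO_eq add.assoc)

lemma final_arith:
  fixes e ua va ub vb uc vc :: real and F G H :: "int list \<Rightarrow> real"
  assumes s1: "ua + va = 1" and d1: "ua = 0 \<or> va = 0"
    and s2: "ub + vb = 1" and d2: "ub = 0 \<or> vb = 0"
    and s3: "uc + vc = 1" and d3: "uc = 0 \<or> vc = 0"
    and nF: "\<forall>x. 0 \<le> F x" and nG: "\<forall>x. 0 \<le> G x" and nH: "\<forall>x. 0 \<le> H x"
    and F1: "F[1,1]+F[1,-1] = (1+e)/2 * ua + (1-e)/2 * va" and F2: "F[-1,1]+F[-1,-1] = (1+e)/2 * va + (1-e)/2 * ua"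
    and F3: "F[1,1]+F[-1,1] = (1+e)/2 * ub + (1-e)/2 * vb" and F4: "F[1,-1]+F[-1,-1] = (1+e)/2 * vb + (1-e)/2 * ub"
    and G1: "G[1,1]+G[1,-1] = (1+e)/2 * ua + (1-e)/2 * va" and G2: "G[-1,1]+G[-1,-1] = (1+e)/2 * va + (1-e)/2 * ua"
    and G3: "G[1,1]+G[-1,1] = (1+e)/2 * uc + (1-e)/2 * vc" and G4: "G[1,-1]+G[-1,-1] = (1+e)/2 * vc + (1-e)/2 * uc"
    and H1: "H[1,1]+H[1,-1] = (1+e)/2 * ub + (1-e)/2 * vb" and H2: "H[-1,1]+H[-1,-1] = (1+e)/2 * vb + (1-e)/2 * ub"
    and H3: "H[1,1]+H[-1,1] = (1+e)/2 * uc + (1-e)/2 * vc" and H4: "H[1,-1]+H[-1,-1] = (1+e)/2 * vc + (1-e)/2 * uc"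
  shows "(1/3) * ((F[1,-1]+F[-1,1]) + (G[1,-1]+G[-1,1]) + (H[1,-1]+H[-1,1])) \<le> 1 - e/3"
proof -
  have f: "0 \<le> F[1,1]" "0 \<le> F[1,-1]" "0 \<le> F[-1,1]" "0 \<le> F[-1,-1]"
    "0 \<le> G[1,1]" "0 \<le> G[1,-1]" "0 \<le> G[-1,1]" "0 \<le> G[-1,-1]"
    "0 \<le> H[1,1]" "0 \<le> H[1,-1]" "0 \<le> H[-1,1]" "0 \<le> H[-1,-1]" using nF nG nH by auto
  have c1: "(ua = 0 \<and> va = 1) \<or> (ua = 1 \<and> va = 0)" using s1 d1 by auto
  have c2: "(ub = 0 \<and> vb = 1) \<or> (ub = 1 \<and> vb = 0)" using s2 d2 by auto
  have c3: "(uc = 0 \<and> vc = 1) \<or> (uc = 1 \<and> vc = 0)" using s3 d3 by auto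
  show ?thesis
    using c1 c2 c3 F1 F2 F3 F4 G1 G2 G3 G4 H1 H2 H3 H4 f
    by (elim disjE conjE; simp; linarith)
qed

context
  fixes L :: "'l measure" and dens :: "'p \<Rightarrow> cmat"
    and outs :: "'m \<Rightarrow> outcome set" and povm :: "'m \<Rightarrow> outcome \<Rightarrow> cmat"
    and \<mu> :: "'p \<Rightarrow> 'l measure" and \<xi> :: "'m \<Rightarrow> outcome \<Rightarrow> 'l \<Rightarrow> real"
  assumes OT: "qubit_operational_theory dens outs povm"
    and OM: "ontological_model L dens outs povm \<mu> \<xi>"
    and GN: "generalized_noncontextual dens outs povm \<mu> \<xi>"
begin

lemmas OTu = OT[unfolded qubit_operational_theory_def]
lemma OT_dens: "\<forall>\<rho>. is_density \<rho> \<longrightarrow> (\<exists>P. dens P = \<rho>)" using OTu[THEN conjunct2, THEN conjunct1] .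
lemma OT_meas: "\<forall>M. finite (outs M) \<and> outs M \<noteq> {} \<and> (\<forall>x\<in>outs M. is_effect (povm M x)) \<and>
          (\<forall>x. x \<notin> outs M \<longrightarrow> povm M x = 0) \<and> sum (povm M) (outs M) = mat 1"
  using OTu[THEN conjunct2, THEN conjunct2, THEN conjunct1] .
lemma OT_real: "\<forall>Os E. finite Os \<and> Os \<noteq> {} \<and> (\<forall>x\<in>Os. is_effect (E x)) \<and> sum E Os = mat 1 \<longrightarrow>
          (\<exists>M. outs M = Os \<and> (\<forall>x\<in>Os. povm M x = E x))"
  using OTu[THEN conjunct2, THEN conjunct2, THEN conjunct2] .
lemmas OMu = OM[unfolded ontological_model_def]
lemma OM_prob: "prob_space (\<mu> P)" "sets (\<mu> P) = sets L"
  using OMu[THEN conjunct1] by auto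
lemma OM_meas: "\<xi> M x \<in> borel_measurable L"
  using OMu[THEN conjunct2, THEN conjunct1] by blast
lemma OM_nonneg: "0 \<le> \<xi> M x l"
  using OMu[THEN conjunct2, THEN conjunct2, THEN conjunct1] by blast
lemma OM_sum: "l \<in> space L \<Longrightarrow> (\<Sum>x\<in>outs M. \<xi> M x l) = 1"
  using OMu[THEN conjunct2, THEN conjunct2, THEN conjunct2, THEN conjunct2, THEN conjunct1] by blast
lemma OM_int: "x \<in> outs M \<Longrightarrow> (\<integral>l. \<xi> M x l \<partial>\<mu> P) = Re (trace (dens P ** povm M x))"
  using OMu[THEN conjunct2, THEN conjunct2, THEN conjunct2, THEN conjunct2, THEN conjunct2, THEN conjunct1] by blast
lemma OM_pmix: "\<forall>P1 P2 t. 0 \<le> t \<and> t \<le> 1 \<longrightarrow>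
        (\<exists>P. dens P = t *\<^sub>R dens P1 + (1 - t) *\<^sub>R dens P2 \<and>
             (\<forall>A\<in>sets L. measure (\<mu> P) A =
                 t * measure (\<mu> P1) A + (1 - t) * measure (\<mu> P2) A))"
  using OMu[THEN conjunct2, THEN conjunct2, THEN conjunct2, THEN conjunct2, THEN conjunct2, THEN conjunct2, THEN conjunct1] .
lemma OM_mmix: "\<forall>M1 M2 t. 0 \<le> t \<and> t \<le> 1 \<longrightarrow>
        (\<exists>M. outs M = outs M1 \<union> outs M2 \<and>
             povm M = (\<lambda>x. t *\<^sub>R povm M1 x + (1 - t) *\<^sub>R povm M2 x) \<and>
             \<xi> M = (\<lambda>x l. t * \<xi> M1 x l + (1 - t) * \<xi> M2 x l))"
  using OMu[THEN conjunct2, THEN conjunct2, THEN conjunct2, THEN conjunct2, THEN conjunct2, THEN conjunct2, THEN conjunct2, THEN conjunct1] .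
lemma OM_cg: "\<forall>M (f :: outcome \<Rightarrow> outcome).
        (\<exists>M'. outs M' = f ` outs M \<and>
              povm M' = (\<lambda>y. \<Sum>x\<in>{x\<in>outs M. f x = y}. povm M x) \<and>
              \<xi> M' = (\<lambda>y l. \<Sum>x\<in>{x\<in>outs M. f x = y}. \<xi> M x l))"
  using OMu[THEN conjunct2, THEN conjunct2, THEN conjunct2, THEN conjunct2, THEN conjunct2, THEN conjunct2, THEN conjunct2, THEN conjunct2] .
lemma PNC: "dens P1 = dens P2 \<Longrightarrow> \<mu> P1 = \<mu> P2"
  using GN unfolding generalized_noncontextual_def preparation_noncontextual_def by blast
lemma MNC: "outs M1 = outs M2 \<Longrightarrow> povm M1 = povm M2 \<Longrightarrow> \<xi> M1 = \<xi> M2"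
  using GN unfolding generalized_noncontextual_def measurement_noncontextual_def by blast

definition tm :: "'m \<Rightarrow> cmat \<Rightarrow> cmat \<Rightarrow> bool" where
  "tm M E1 E2 \<longleftrightarrow> outs M = O1 \<and> povm M [1] = E1 \<and> povm M [-1] = E2"

lemma povm_out: "x \<notin> outs M \<Longrightarrow> povm M x = 0"
  using OT_meas by blast

lemma tm_unique: "tm M E1 E2 \<Longrightarrow> tm M' E1 E2 \<Longrightarrow> \<xi> M = \<xi> M'"
proof -
  assume a: "tm M E1 E2" "tm M' E1 E2"
  have "povm M = povm M'"
  proof
    fix x show "povm M x = povm M' x"
    proof (cases "x \<in> O1")
      case True
      then have "x = [1] \<or> x = [-1]" by (simp add: O1_def)
      then show ?thesis using a unfolding tm_def by metis
    next
      case False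
      then show ?thesis using a povm_out[of x M] povm_out[of x M'] unfolding tm_def by simp
    qed
  qed
  moreover have "outs M = outs M'" using a by (simp add: tm_def)
  ultimately show ?thesis by (rule MNC[rotated])
qed

lemma proj_exists:
  assumes "norm n = 1"
  shows "\<exists>M. tm M (noisy_effect 1 n 1) (noisy_effect 1 n (-1))"
proof -
  define E where "E = (\<lambda>x::outcome. if x = [1] then noisy_effect 1 n 1 else noisy_effect 1 n (-1))"
  have "finite O1" "O1 \<noteq> {}" by (auto simp: O1_def)
  moreover have "\<forall>x\<in>O1. is_effect (E x)" using effect_ne1[OF assms, of 1] effect_ne1[OF assms, of "-1"] by (simp add: O1_def E_def)
  moreover have "sum E O1 = mat 1" by (simp add: sum_O1 E_def ne_sum)
  ultimately obtain M where "outs M = O1" "\<forall>x\<in>O1. povm M x = E x"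
    using OT_real[rule_format, of O1 E] by blast
  then have "tm M (noisy_effect 1 n 1) (noisy_effect 1 n (-1))"
    by (auto simp: tm_def O1_def E_def)
  then show ?thesis by blast
qed

lemma swap_exists:
  assumes "tm M E1 E2"
  shows "\<exists>M'. tm M' E2 E1 \<and> (\<forall>l. \<xi> M' [1] l = \<xi> M [-1] l \<and> \<xi> M' [-1] l = \<xi> M [1] l)"
proof -
  define f where "f = (\<lambda>x::outcome. if x = [1] then [-1::int] else [1])"
  obtain M' where M': "outs M' = f ` outs M"
    "povm M' = (\<lambda>y. \<Sum>x\<in>{x\<in>outs M. f x = y}. povm M x)"
    "\<xi> M' = (\<lambda>y l. \<Sum>x\<in>{x\<in>outs M. f x = y}. \<xi> M x l)"
    using OM_cg[rule_format, where M=M and f=f] by blast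
  have o: "outs M = O1" using assms by (simp add: tm_def)
  have s1: "{x\<in>O1. f x = [1]} = {[-1]}" and s2: "{x\<in>O1. f x = [-1]} = {[1]}"
    unfolding O1_def f_def by auto
  have "outs M' = O1" unfolding M'(1) o O1_def f_def by auto
  then have "tm M' E2 E1" using assms by (simp add: tm_def M'(2) o s1 s2)
  moreover have "\<forall>l. \<xi> M' [1] l = \<xi> M [-1] l \<and> \<xi> M' [-1] l = \<xi> M [1] l"
    by (simp add: M'(3) o s1 s2)
  ultimately show ?thesis by blast
qed

lemma mix_exists:
  assumes "tm M1 A1 A2" "tm M2 B1 B2" "0 \<le> t" "t \<le> 1"
  shows "\<exists>M. tm M (t *\<^sub>R A1 + (1-t) *\<^sub>R B1) (t *\<^sub>R A2 + (1-t) *\<^sub>R B2) \<and>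
     (\<forall>x l. \<xi> M x l = t * \<xi> M1 x l + (1-t) * \<xi> M2 x l)"
proof -
  obtain M where M: "outs M = outs M1 \<union> outs M2"
    "povm M = (\<lambda>x. t *\<^sub>R povm M1 x + (1 - t) *\<^sub>R povm M2 x)"
    "\<xi> M = (\<lambda>x l. t * \<xi> M1 x l + (1 - t) * \<xi> M2 x l)"
    using OM_mmix[THEN spec[of _ M1], THEN spec[of _ M2], THEN spec[of _ t]] assms(3,4) by blast
  then show ?thesis using assms(1,2) by (auto simp: tm_def)
qed

lemma noisy_resp:
  assumes "tm M0 (noisy_effect 1 n 1) (noisy_effect 1 n (-1))" "0 \<le> e" "e \<le> 1"
  shows "\<exists>N. tm N (noisy_effect e n 1) (noisy_effect e n (-1)) \<and>
     (\<forall>l. \<xi> N [1] l = (1+e)/2 * \<xi> M0 [1] l + (1-e)/2 * \<xi> M0 [-1] l \<and>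
          \<xi> N [-1] l = (1+e)/2 * \<xi> M0 [-1] l + (1-e)/2 * \<xi> M0 [1] l)"
proof -
  obtain M' where M': "tm M' (noisy_effect 1 n (-1)) (noisy_effect 1 n 1)"
    "\<forall>l. \<xi> M' [1] l = \<xi> M0 [-1] l \<and> \<xi> M' [-1] l = \<xi> M0 [1] l"
    using swap_exists[OF assms(1)] by blast
  have t: "0 \<le> (1+e)/2" "(1+e)/2 \<le> 1" using assms(2,3) by auto
  obtain N where N: "tm N (((1+e)/2) *\<^sub>R noisy_effect 1 n 1 + (1-(1+e)/2) *\<^sub>R noisy_effect 1 n (-1))
       (((1+e)/2) *\<^sub>R noisy_effect 1 n (-1) + (1-(1+e)/2) *\<^sub>R noisy_effect 1 n 1)"
     "\<forall>x l. \<xi> N x l = (1+e)/2 * \<xi> M0 x l + (1-(1+e)/2) * \<xi> M' x l"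
    using mix_exists[OF assms(1) M'(1) t] by blast
  have q: "1 - (1+e)/2 = (1-e)/2" by (simp add: field_simps)
  have "tm N (noisy_effect e n 1) (noisy_effect e n (-1))"
    using N(1) unfolding q using ne_decomp[of e n 1] ne_decomp[of e n "-1"] by simp
  moreover have "\<forall>l. \<xi> N [1] l = (1+e)/2 * \<xi> M0 [1] l + (1-e)/2 * \<xi> M0 [-1] l \<and>
          \<xi> N [-1] l = (1+e)/2 * \<xi> M0 [-1] l + (1-e)/2 * \<xi> M0 [1] l"
    using N(2) M'(2) q by simp
  ultimately show ?thesis by blast
qed

lemma marg1:
  assumes "outs MJ = JO" "is_joint_measurement (povm MJ) Ei Ej"
  shows "\<exists>M'. tm M' (Ei 1) (Ei (-1)) \<and>
     (\<forall>l. \<xi> M' [1] l = \<xi> MJ [1,1] l + \<xi> MJ [1,-1] l \<and> \<xi> M' [-1] l = \<xi> MJ [-1,1] l + \<xi> MJ [-1,-1] l)"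
proof -
  define f where "f = (\<lambda>x::outcome. [hd x])"
  obtain M' where M': "outs M' = f ` outs MJ"
    "povm M' = (\<lambda>y. \<Sum>x\<in>{x\<in>outs MJ. f x = y}. povm MJ x)"
    "\<xi> M' = (\<lambda>y l. \<Sum>x\<in>{x\<in>outs MJ. f x = y}. \<xi> MJ x l)"
    using OM_cg[THEN spec[of _ MJ], THEN spec[of _ f]] by blast
  have s1: "{x\<in>JO. f x = [1]} = {[1,1],[1,-1]}" and s2: "{x\<in>JO. f x = [-1]} = {[-1,1],[-1,-1]}"
    unfolding JO_eq f_def by auto
  have o: "outs M' = O1" unfolding M'(1) assms(1) JO_eq O1_def f_def by auto
  have j: "povm MJ [a,1] + povm MJ [a,-1] = Ei a" if "a \<in> {1,-1}" for a
    using assms(2) that unfolding is_joint_measurement_def by auto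
  have "tm M' (Ei 1) (Ei (-1))" unfolding tm_def using j[of 1] j[of "-1"]
    by (simp add: o M'(2) assms(1) s1 s2)
  moreover have "\<forall>l. \<xi> M' [1] l = \<xi> MJ [1,1] l + \<xi> MJ [1,-1] l \<and> \<xi> M' [-1] l = \<xi> MJ [-1,1] l + \<xi> MJ [-1,-1] l"
    by (simp add: M'(3) assms(1) s1 s2)
  ultimately show ?thesis by blast
qed

lemma marg2:
  assumes "outs MJ = JO" "is_joint_measurement (povm MJ) Ei Ej"
  shows "\<exists>M'. tm M' (Ej 1) (Ej (-1)) \<and>
     (\<forall>l. \<xi> M' [1] l = \<xi> MJ [1,1] l + \<xi> MJ [-1,1] l \<and> \<xi> M' [-1] l = \<xi> MJ [1,-1] l + \<xi> MJ [-1,-1] l)"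
proof -
  define f where "f = (\<lambda>x::outcome. [hd (tl x)])"
  obtain M' where M': "outs M' = f ` outs MJ"
    "povm M' = (\<lambda>y. \<Sum>x\<in>{x\<in>outs MJ. f x = y}. povm MJ x)"
    "\<xi> M' = (\<lambda>y l. \<Sum>x\<in>{x\<in>outs MJ. f x = y}. \<xi> MJ x l)"
    using OM_cg[THEN spec[of _ MJ], THEN spec[of _ f]] by blast
  have s1: "{x\<in>JO. f x = [1]} = {[1,1],[-1,1]}" and s2: "{x\<in>JO. f x = [-1]} = {[1,-1],[-1,-1]}"
    unfolding JO_eq f_def by auto
  have o: "outs M' = O1" unfolding M'(1) assms(1) JO_eq O1_def f_def by auto
  have j: "povm MJ [1,b] + povm MJ [-1,b] = Ej b" if "b \<in> {1,-1}" for b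
    using assms(2) that unfolding is_joint_measurement_def by auto
  have "tm M' (Ej 1) (Ej (-1))" unfolding tm_def using j[of 1] j[of "-1"]
    by (simp add: o M'(2) assms(1) s1 s2)
  moreover have "\<forall>l. \<xi> M' [1] l = \<xi> MJ [1,1] l + \<xi> MJ [-1,1] l \<and> \<xi> M' [-1] l = \<xi> MJ [1,-1] l + \<xi> MJ [-1,-1] l"
    by (simp add: M'(3) assms(1) s1 s2)
  ultimately show ?thesis by blast
qed

lemma OT_isd: "is_density (dens P)"
  using OTu[THEN conjunct1] by blast

lemma spaceP: "space (\<mu> P) = space L"
  using sets_eq_imp_space_eq[OF OM_prob(2)] .

lemma meas_P: "\<xi> M x \<in> borel_measurable (\<mu> P)"
  using OM_meas measurable_cong_sets[OF OM_prob(2) refl] by blast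

lemma tm_bound: "tm M E1 E2 \<Longrightarrow> x \<in> O1 \<Longrightarrow> l \<in> space L \<Longrightarrow> \<xi> M x l \<le> 1"
proof -
  assume a: "tm M E1 E2" "x \<in> O1" "l \<in> space L"
  have "\<xi> M [1] l + \<xi> M [-1] l = 1" using OM_sum[OF a(3), of M] a(1) by (simp add: tm_def sum_O1)
  moreover have "0 \<le> \<xi> M [1] l" "0 \<le> \<xi> M [-1] l" by (rule OM_nonneg)+
  ultimately show ?thesis using a(2) by (auto simp: O1_def)
qed

lemma zero_int:
  assumes "tm M E1 E2" "x \<in> O1" "(\<integral>l. \<xi> M x l \<partial>\<mu> Q) = 0"
  shows "measure (\<mu> Q) {l\<in>space L. \<xi> M x l \<noteq> 0} = 0"
proof -
  interpret prob_space "\<mu> Q" by (rule OM_prob(1))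
  have "integrable (\<mu> Q) (\<xi> M x)"
  proof (rule integrable_const_bound[where B=1])
    show "AE l in \<mu> Q. norm (\<xi> M x l) \<le> 1"
      using tm_bound[OF assms(1,2)] OM_nonneg[of M x] by (intro AE_I2) (simp add: spaceP)
    show "\<xi> M x \<in> borel_measurable (\<mu> Q)" by (rule meas_P)
  qed
  then have "AE l in \<mu> Q. \<xi> M x l = 0"
    using integral_nonneg_eq_0_iff_AE[of "\<mu> Q" "\<xi> M x"] assms(3) OM_nonneg[of M x] by simp
  moreover have "{l\<in>space L. \<xi> M x l \<noteq> 0} \<in> sets (\<mu> Q)"
  proof -
    have [measurable]: "\<xi> M x \<in> borel_measurable L" by (rule OM_meas)
    have "{l\<in>space L. \<xi> M x l \<noteq> 0} \<in> sets L" by measurable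
    then show ?thesis using OM_prob(2) by simp
  qed
  ultimately have "emeasure (\<mu> Q) {l\<in>space L. \<xi> M x l \<noteq> 0} = 0"
    using AE_iff_measurable[of "{l\<in>space L. \<xi> M x l \<noteq> 0}" "\<mu> Q" "\<lambda>l. \<xi> M x l = 0"] by (simp add: spaceP)
  then show ?thesis by (simp add: measure_def)
qed

lemma det:
  assumes "tm M0 (noisy_effect 1 n 1) (noisy_effect 1 n (-1))" "norm n = 1"
  shows "AE l in \<mu> P. \<xi> M0 [1] l = 0 \<or> \<xi> M0 [-1] l = 0"
proof -
  define S where "S = {l\<in>space L. \<xi> M0 [1] l \<noteq> 0 \<and> \<xi> M0 [-1] l \<noteq> 0}"
  have [measurable]: "\<xi> M0 x \<in> borel_measurable L" for x by (rule OM_meas)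
  have Smeas: "S \<in> sets L" unfolding S_def by measurable
  have o: "outs M0 = O1" "povm M0 [1] = noisy_effect 1 n 1" "povm M0 [-1] = noisy_effect 1 n (-1)"
    using assms(1) by (auto simp: tm_def)
  have S0: "measure (\<mu> Q) S = 0" if z: "measure (\<mu> Q) {l\<in>space L. \<xi> M0 x l \<noteq> 0} = 0" and x: "x \<in> O1" for Q x
  proof -
    interpret prob_space "\<mu> Q" by (rule OM_prob(1))
    have "{l\<in>space L. \<xi> M0 x l \<noteq> 0} \<in> sets (\<mu> Q)" using OM_prob(2) by simp
    moreover have "S \<subseteq> {l\<in>space L. \<xi> M0 x l \<noteq> 0}" using x unfolding S_def O1_def by auto
    ultimately have "measure (\<mu> Q) S \<le> measure (\<mu> Q) {l\<in>space L. \<xi> M0 x l \<noteq> 0}"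
      by (intro finite_measure_mono)
    then have "measure (\<mu> Q) S \<le> 0" using z by simp
    then show ?thesis using measure_nonneg[of "\<mu> Q" S] by linarith
  qed
  have "is_density (noisy_effect 1 n 1)" by (rule density_ne1[OF assms(2)]) simp
  then obtain P1 where P1: "dens P1 = noisy_effect 1 n 1"
    using OT_dens by blast
  have "is_density (noisy_effect 1 n (-1))" by (rule density_ne1[OF assms(2)]) simp
  then obtain P2 where P2: "dens P2 = noisy_effect 1 n (-1)"
    using OT_dens by blast
  have half: "0 \<le> (1/2::real) \<and> (1/2::real) \<le> 1" by simp
  have i1: "(\<integral>l. \<xi> M0 [-1] l \<partial>\<mu> P1) = 0"
    using OM_int[of "[-1]" M0 P1] trace_orth[OF assms(2), of 1] by (simp add: o P1 O1_def)
  have i2: "(\<integral>l. \<xi> M0 [1] l \<partial>\<mu> P2) = 0"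
    using OM_int[of "[1]" M0 P2] trace_orth[OF assms(2), of "-1"] by (simp add: o P2 O1_def)
  have m1: "measure (\<mu> P1) S = 0"
    using S0[OF zero_int[OF assms(1) _ i1]] by (simp add: O1_def)
  have m2: "measure (\<mu> P2) S = 0"
    using S0[OF zero_int[OF assms(1) _ i2]] by (simp add: O1_def)
  obtain P0 where P0: "dens P0 = (1/2) *\<^sub>R dens P1 + (1 - 1/2) *\<^sub>R dens P2"
    "\<forall>A\<in>sets L. measure (\<mu> P0) A = 1/2 * measure (\<mu> P1) A + (1 - 1/2) * measure (\<mu> P2) A"
    using OM_pmix[THEN spec[of _ P1], THEN spec[of _ P2], THEN spec[of _ "1/2"], THEN mp, OF half] by blast
  have "measure (\<mu> P0) S = 1/2 * measure (\<mu> P1) S + (1 - 1/2) * measure (\<mu> P2) S"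
    using P0(2) Smeas by blast
  then have m0: "measure (\<mu> P0) S = 0" using m1 m2 by simp
  have d0: "dens P0 = (1/2) *\<^sub>R mat 1" using P0(1) P1 P2 half_mix[of n 1] by simp
  obtain P' where P': "dens P' = mat 1 - dens P"
    using OT_dens density_compl[OF OT_isd[of P]] by blast
  obtain P'' where P'': "dens P'' = (1/2) *\<^sub>R dens P + (1 - 1/2) *\<^sub>R dens P'"
    "\<forall>A\<in>sets L. measure (\<mu> P'') A = 1/2 * measure (\<mu> P) A + (1 - 1/2) * measure (\<mu> P') A"
    using OM_pmix[THEN spec[of _ P], THEN spec[of _ P'], THEN spec[of _ "1/2"], THEN mp, OF half] by blast
  have "dens P'' = (1/2) *\<^sub>R mat 1" using P''(1) P'
    by (simp add: scaleR_diff_right)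
  then have "\<mu> P'' = \<mu> P0" using d0 by (intro PNC) simp
  moreover have "measure (\<mu> P'') S = 1/2 * measure (\<mu> P) S + (1 - 1/2) * measure (\<mu> P') S"
    using P''(2) Smeas by blast
  ultimately have "1/2 * measure (\<mu> P) S + (1 - 1/2) * measure (\<mu> P') S = 0" using m0 by simp
  then have "measure (\<mu> P) S + measure (\<mu> P') S = 0" by simp
  then have mP: "measure (\<mu> P) S = 0" using measure_nonneg[of "\<mu> P" S] measure_nonneg[of "\<mu> P'" S] by linarith
  interpret prob_space "\<mu> P" by (rule OM_prob(1))
  have em: "emeasure (\<mu> P) S = 0" using mP emeasure_eq_measure by simp
  have Sset: "S \<in> sets (\<mu> P)" using Smeas OM_prob(2) by simp
  have eqS: "{l\<in>space (\<mu> P). \<not> (\<xi> M0 [1] l = 0 \<or> \<xi> M0 [-1] l = 0)} = S" unfolding S_def spaceP by auto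
  show ?thesis using AE_iff_measurable[OF Sset eqS] em by simp
qed

lemma main_ctx:
  fixes n :: "nat \<Rightarrow> real^3" and \<eta> :: real and MJ :: "nat \<Rightarrow> nat \<Rightarrow> 'm"
  assumes an: "\<forall>k\<in>{1,2,3}. norm (n k) = 1"
    and e0: "0 \<le> \<eta>" and e1: "\<eta> \<le> 1"
    and aj: "\<forall>i\<in>{1,2,3}. \<forall>j\<in>{1,2,3}. i < j \<longrightarrow>
           outs (MJ i j) = {[a, b] | a b. a \<in> {1, -1} \<and> b \<in> {1, -1}} \<and>
           is_joint_measurement (povm (MJ i j)) (noisy_effect \<eta> (n i)) (noisy_effect \<eta> (n j))"
  shows "\<forall>P. AE l in \<mu> P.
           (1/3) * (prob_neq \<xi> (MJ 1 2) l + prob_neq \<xi> (MJ 1 3) l + prob_neq \<xi> (MJ 2 3) l)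
             \<le> 1 - \<eta> / 3"
proof
  fix P
  have n1: "norm (n 1) = 1" and n2: "norm (n 2) = 1" and n3: "norm (n 3) = 1" using an by auto
  have J12: "outs (MJ 1 2) = JO" "is_joint_measurement (povm (MJ 1 2)) (noisy_effect \<eta> (n 1)) (noisy_effect \<eta> (n 2))"
    using aj[rule_format, of 1 2] unfolding JO_def by simp_all
  have J13: "outs (MJ 1 3) = JO" "is_joint_measurement (povm (MJ 1 3)) (noisy_effect \<eta> (n 1)) (noisy_effect \<eta> (n 3))"
    using aj[rule_format, of 1 3] unfolding JO_def by simp_all
  have J23: "outs (MJ 2 3) = JO" "is_joint_measurement (povm (MJ 2 3)) (noisy_effect \<eta> (n 2)) (noisy_effect \<eta> (n 3))"
    using aj[rule_format, of 2 3] unfolding JO_def by simp_all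
  obtain M1 where M1: "tm M1 (noisy_effect 1 (n 1) 1) (noisy_effect 1 (n 1) (-1))" using proj_exists[OF n1] by blast
  obtain M2 where M2: "tm M2 (noisy_effect 1 (n 2) 1) (noisy_effect 1 (n 2) (-1))" using proj_exists[OF n2] by blast
  obtain M3 where M3: "tm M3 (noisy_effect 1 (n 3) 1) (noisy_effect 1 (n 3) (-1))" using proj_exists[OF n3] by blast
  obtain N1 where N1: "tm N1 (noisy_effect \<eta> (n 1) 1) (noisy_effect \<eta> (n 1) (-1))"
    "\<forall>l. \<xi> N1 [1] l = (1+\<eta>)/2 * \<xi> M1 [1] l + (1-\<eta>)/2 * \<xi> M1 [-1] l \<and>
          \<xi> N1 [-1] l = (1+\<eta>)/2 * \<xi> M1 [-1] l + (1-\<eta>)/2 * \<xi> M1 [1] l"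
    using noisy_resp[OF M1 e0 e1] by blast
  obtain N2 where N2: "tm N2 (noisy_effect \<eta> (n 2) 1) (noisy_effect \<eta> (n 2) (-1))"
    "\<forall>l. \<xi> N2 [1] l = (1+\<eta>)/2 * \<xi> M2 [1] l + (1-\<eta>)/2 * \<xi> M2 [-1] l \<and>
          \<xi> N2 [-1] l = (1+\<eta>)/2 * \<xi> M2 [-1] l + (1-\<eta>)/2 * \<xi> M2 [1] l"
    using noisy_resp[OF M2 e0 e1] by blast
  obtain N3 where N3: "tm N3 (noisy_effect \<eta> (n 3) 1) (noisy_effect \<eta> (n 3) (-1))"
    "\<forall>l. \<xi> N3 [1] l = (1+\<eta>)/2 * \<xi> M3 [1] l + (1-\<eta>)/2 * \<xi> M3 [-1] l \<and>
          \<xi> N3 [-1] l = (1+\<eta>)/2 * \<xi> M3 [-1] l + (1-\<eta>)/2 * \<xi> M3 [1] l"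
    using noisy_resp[OF M3 e0 e1] by blast
  obtain A12 where A12: "tm A12 (noisy_effect \<eta> (n 1) 1) (noisy_effect \<eta> (n 1) (-1))"
     "\<forall>l. \<xi> A12 [1] l = \<xi> (MJ 1 2) [1,1] l + \<xi> (MJ 1 2) [1,-1] l \<and> \<xi> A12 [-1] l = \<xi> (MJ 1 2) [-1,1] l + \<xi> (MJ 1 2) [-1,-1] l"
    using marg1[OF J12] by blast
  obtain B12 where B12: "tm B12 (noisy_effect \<eta> (n 2) 1) (noisy_effect \<eta> (n 2) (-1))"
     "\<forall>l. \<xi> B12 [1] l = \<xi> (MJ 1 2) [1,1] l + \<xi> (MJ 1 2) [-1,1] l \<and> \<xi> B12 [-1] l = \<xi> (MJ 1 2) [1,-1] l + \<xi> (MJ 1 2) [-1,-1] l"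
    using marg2[OF J12] by blast
  obtain A13 where A13: "tm A13 (noisy_effect \<eta> (n 1) 1) (noisy_effect \<eta> (n 1) (-1))"
     "\<forall>l. \<xi> A13 [1] l = \<xi> (MJ 1 3) [1,1] l + \<xi> (MJ 1 3) [1,-1] l \<and> \<xi> A13 [-1] l = \<xi> (MJ 1 3) [-1,1] l + \<xi> (MJ 1 3) [-1,-1] l"
    using marg1[OF J13] by blast
  obtain B13 where B13: "tm B13 (noisy_effect \<eta> (n 3) 1) (noisy_effect \<eta> (n 3) (-1))"
     "\<forall>l. \<xi> B13 [1] l = \<xi> (MJ 1 3) [1,1] l + \<xi> (MJ 1 3) [-1,1] l \<and> \<xi> B13 [-1] l = \<xi> (MJ 1 3) [1,-1] l + \<xi> (MJ 1 3) [-1,-1] l"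
    using marg2[OF J13] by blast
  obtain A23 where A23: "tm A23 (noisy_effect \<eta> (n 2) 1) (noisy_effect \<eta> (n 2) (-1))"
     "\<forall>l. \<xi> A23 [1] l = \<xi> (MJ 2 3) [1,1] l + \<xi> (MJ 2 3) [1,-1] l \<and> \<xi> A23 [-1] l = \<xi> (MJ 2 3) [-1,1] l + \<xi> (MJ 2 3) [-1,-1] l"
    using marg1[OF J23] by blast
  obtain B23 where B23: "tm B23 (noisy_effect \<eta> (n 3) 1) (noisy_effect \<eta> (n 3) (-1))"
     "\<forall>l. \<xi> B23 [1] l = \<xi> (MJ 2 3) [1,1] l + \<xi> (MJ 2 3) [-1,1] l \<and> \<xi> B23 [-1] l = \<xi> (MJ 2 3) [1,-1] l + \<xi> (MJ 2 3) [-1,-1] l"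
    using marg2[OF J23] by blast
  have eA12: "\<xi> A12 = \<xi> N1" by (rule tm_unique[OF A12(1) N1(1)])
  have eB12: "\<xi> B12 = \<xi> N2" by (rule tm_unique[OF B12(1) N2(1)])
  have eA13: "\<xi> A13 = \<xi> N1" by (rule tm_unique[OF A13(1) N1(1)])
  have eB13: "\<xi> B13 = \<xi> N3" by (rule tm_unique[OF B13(1) N3(1)])
  have eA23: "\<xi> A23 = \<xi> N2" by (rule tm_unique[OF A23(1) N2(1)])
  have eB23: "\<xi> B23 = \<xi> N3" by (rule tm_unique[OF B23(1) N3(1)])
  have F12: "\<forall>l. \<xi> (MJ 1 2) [1,1] l + \<xi> (MJ 1 2) [1,-1] l = (1+\<eta>)/2 * \<xi> M1 [1] l + (1-\<eta>)/2 * \<xi> M1 [-1] l \<and>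
      \<xi> (MJ 1 2) [-1,1] l + \<xi> (MJ 1 2) [-1,-1] l = (1+\<eta>)/2 * \<xi> M1 [-1] l + (1-\<eta>)/2 * \<xi> M1 [1] l"
    using A12(2)[unfolded eA12] N1(2) by auto
  have G12: "\<forall>l. \<xi> (MJ 1 2) [1,1] l + \<xi> (MJ 1 2) [-1,1] l = (1+\<eta>)/2 * \<xi> M2 [1] l + (1-\<eta>)/2 * \<xi> M2 [-1] l \<and>
      \<xi> (MJ 1 2) [1,-1] l + \<xi> (MJ 1 2) [-1,-1] l = (1+\<eta>)/2 * \<xi> M2 [-1] l + (1-\<eta>)/2 * \<xi> M2 [1] l"
    using B12(2)[unfolded eB12] N2(2) by auto
  have F13: "\<forall>l. \<xi> (MJ 1 3) [1,1] l + \<xi> (MJ 1 3) [1,-1] l = (1+\<eta>)/2 * \<xi> M1 [1] l + (1-\<eta>)/2 * \<xi> M1 [-1] l \<and>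
      \<xi> (MJ 1 3) [-1,1] l + \<xi> (MJ 1 3) [-1,-1] l = (1+\<eta>)/2 * \<xi> M1 [-1] l + (1-\<eta>)/2 * \<xi> M1 [1] l"
    using A13(2)[unfolded eA13] N1(2) by auto
  have G13: "\<forall>l. \<xi> (MJ 1 3) [1,1] l + \<xi> (MJ 1 3) [-1,1] l = (1+\<eta>)/2 * \<xi> M3 [1] l + (1-\<eta>)/2 * \<xi> M3 [-1] l \<and>
      \<xi> (MJ 1 3) [1,-1] l + \<xi> (MJ 1 3) [-1,-1] l = (1+\<eta>)/2 * \<xi> M3 [-1] l + (1-\<eta>)/2 * \<xi> M3 [1] l"
    using B13(2)[unfolded eB13] N3(2) by auto
  have F23: "\<forall>l. \<xi> (MJ 2 3) [1,1] l + \<xi> (MJ 2 3) [1,-1] l = (1+\<eta>)/2 * \<xi> M2 [1] l + (1-\<eta>)/2 * \<xi> M2 [-1] l \<and>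
      \<xi> (MJ 2 3) [-1,1] l + \<xi> (MJ 2 3) [-1,-1] l = (1+\<eta>)/2 * \<xi> M2 [-1] l + (1-\<eta>)/2 * \<xi> M2 [1] l"
    using A23(2)[unfolded eA23] N2(2) by auto
  have G23: "\<forall>l. \<xi> (MJ 2 3) [1,1] l + \<xi> (MJ 2 3) [-1,1] l = (1+\<eta>)/2 * \<xi> M3 [1] l + (1-\<eta>)/2 * \<xi> M3 [-1] l \<and>
      \<xi> (MJ 2 3) [1,-1] l + \<xi> (MJ 2 3) [-1,-1] l = (1+\<eta>)/2 * \<xi> M3 [-1] l + (1-\<eta>)/2 * \<xi> M3 [1] l"
    using B23(2)[unfolded eB23] N3(2) by auto
  have s: "\<xi> M [1] l + \<xi> M [-1] l = 1" if "tm M E1 E2" "l \<in> space L" for M E1 E2 l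
    using OM_sum[OF that(2), of M] that(1) by (simp add: tm_def sum_O1)
  show "AE l in \<mu> P.
           (1/3) * (prob_neq \<xi> (MJ 1 2) l + prob_neq \<xi> (MJ 1 3) l + prob_neq \<xi> (MJ 2 3) l)
             \<le> 1 - \<eta> / 3"
    using det[OF M1 n1, of P] det[OF M2 n2, of P] det[OF M3 n3, of P] AE_space[of "\<mu> P"]
  proof eventually_elim
    case (elim l)
    then have l: "l \<in> space L" by (simp add: spaceP)
    show ?case unfolding prob_neq_def
      by (rule final_arith[where F="\<lambda>x. \<xi> (MJ 1 2) x l" and G="\<lambda>x. \<xi> (MJ 1 3) x l" and H="\<lambda>x. \<xi> (MJ 2 3) x l"
        and ua="\<xi> M1 [1] l" and va="\<xi> M1 [-1] l" and ub="\<xi> M2 [1] l" and vb="\<xi> M2 [-1] l"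
        and uc="\<xi> M3 [1] l" and vc="\<xi> M3 [-1] l",
        OF s[OF M1 l] elim(1) s[OF M2 l] elim(2) s[OF M3 l] elim(3)
        allI[OF OM_nonneg] allI[OF OM_nonneg] allI[OF OM_nonneg]
        F12[rule_format, THEN conjunct1] F12[rule_format, THEN conjunct2]
        G12[rule_format, THEN conjunct1] G12[rule_format, THEN conjunct2]
        F13[rule_format, THEN conjunct1] F13[rule_format, THEN conjunct2]
        G13[rule_format, THEN conjunct1] G13[rule_format, THEN conjunct2]
        F23[rule_format, THEN conjunct1] F23[rule_format, THEN conjunct2]
        G23[rule_format, THEN conjunct1] G23[rule_format, THEN conjunct2]])
  qed
qed

end

theorem mainTheorem15:
  fixes L :: "'l measure" and dens :: "'p \<Rightarrow> cmat"
    and outs :: "'m \<Rightarrow> outcome set" and povm :: "'m \<Rightarrow> outcome \<Rightarrow> cmat"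
    and \<mu> :: "'p \<Rightarrow> 'l measure" and \<xi> :: "'m \<Rightarrow> outcome \<Rightarrow> 'l \<Rightarrow> real"
    and n :: "nat \<Rightarrow> real^3" and \<eta> :: real and MJ :: "nat \<Rightarrow> nat \<Rightarrow> 'm"
  assumes "qubit_operational_theory dens outs povm"
    and "ontological_model L dens outs povm \<mu> \<xi>"
    and "generalized_noncontextual dens outs povm \<mu> \<xi>"
    and "\<forall>k\<in>{1,2,3}. norm (n k) = 1"
    and "0 \<le> \<eta>" and "\<eta> \<le> 1"
    and "\<forall>i\<in>{1,2,3}. \<forall>j\<in>{1,2,3}. i < j \<longrightarrow>
           outs (MJ i j) = {[a, b] | a b. a \<in> {1, -1} \<and> b \<in> {1, -1}} \<and>
           is_joint_measurement (povm (MJ i j)) (noisy_effect \<eta> (n i)) (noisy_effect \<eta> (n j))"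
  shows "\<forall>P. AE l in \<mu> P.
           (1/3) * (prob_neq \<xi> (MJ 1 2) l + prob_neq \<xi> (MJ 1 3) l + prob_neq \<xi> (MJ 2 3) l)
             \<le> 1 - \<eta> / 3"
  by (rule main_ctx[OF assms])

end
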